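(* Consider the energy-efficiency maximization problem (P1) described in the context. The maximum of the system energy efficiency $\eta_{EE}$ over the feasible set of (P1) can always be obtained with the power beacon transmitting at full power, $P_0=P_{\max}$ (so that the power variables reduce to $(p_1,\dots,p_K)$).
   Context: System: one power beacon (PB) with transmit power $P_0\ge 0$, one MEC server, a reconfigurable intelligent surface (RIS) with $N$ elements, and $K$ wireless devices (WDs), all nodes single-antenna. Given channels $g_{\mathrm{PU},k}\in\mathbb{C}$, $\mathbf{g}_{\mathrm{PI}},\mathbf{g}_{\mathrm{IU},k}\in\mathbb{C}^{N}$, $h_{\mathrm{UM},k}\in\mathbb{C}$, $\mathbf{h}_{\mathrm{UI},k},\mathbf{h}_{\mathrm{IM}}\in\mathbb{C}^{N}$. For phases $\boldsymbol\theta=(\theta_1,\dots,\theta_N)$ let $\boldsymbol\Theta=\mathrm{diag}(e^{j\theta_1},\dots,e^{j\theta_N})$ and $g_k=g_{\mathrm{PU},k}+\mathbf{g}_{\mathrm{PI}}^H\boldsymbol\Theta\mathbf{g}_{\mathrm{IU},k}$, $h_k=h_{\mathrm{UM},k}+\mathbf{h}_{\mathrm{UI},k}^H\boldsymbol\Theta\mathbf{h}_{\mathrm{IM}}$. Optimization variables: backscatter times $t^b_k\ge0$, active-transmission times $t^o_k\ge0$, backscattering coefficients $\rho_k\in[0,1]$, PB power $P_0\le P_{\max}$, WD transmit powers $p_k\ge0$, execution times $0\le\tau_k\le T$, CPU frequencies $0\le f_k\le f_{\max}$, and phases $\theta_n$ (unit-modulus reflection). Positive constants: $T,\sigma^2,\zeta,C_{\mathrm{cpu}},\epsilon_k,\delta,P_{c,k},p_{c,k},a_k,b_k,c_k$,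 $Q_k\ge0$, $\gamma_{\min,k}$. Throughputs: $\Gamma^b_k=t^b_k\log_2\!\big(1+\zeta\rho_kP_0|h_k|^2|g_k|^2/\sigma^2\big)$, $\Gamma^o_k=t^o_k\log_2\!\big(1+p_k|h_k|^2/\sigma^2\big)$, $\Gamma_k=\tau_kf_k/C_{\mathrm{cpu}}$, $R_{\mathrm{sum}}=\sum_{k=1}^K(\Gamma^b_k+\Gamma^o_k+\Gamma_k)$. Energies: $E_{1,k}=P_{c,k}t^b_k$, $E_{2,k}=\frac{p_k}{\delta}t^o_k+p_{c,k}t^o_k+\epsilon_kf_k^3\tau_k$, $E_{\mathrm{total}}=\sum_k(E_{1,k}+E_{2,k})$. Harvested energy: $E^b_k=\Big(\frac{a_k(1-\rho_k)P_0|g_k|^2+b_k}{(1-\rho_k)P_0|g_k|^2+c_k}-\frac{b_k}{c_k}\Big)t^b_k$, $P^b_k=\frac{a_kP_0|g_k|^2+b_k}{P_0|g_k|^2+c_k}-\frac{b_k}{c_k}$, $E^t_k=E^b_k+\sum_{i\ne k}P^b_kt^b_i$. Problem (P1): maximize $\eta_{EE}=R_{\mathrm{sum}}/E_{\mathrm{total}}$ over all the variables subject to: $\Gamma^b_k+\Gamma^o_k+\Gamma_k\ge\gamma_{\min,k}$ for all $k$; $E_{1,k}+E_{2,k}\le E^t_k+Q_k$ for all $k$; $\sum_{k=1}^K(t^b_k+t^o_k)\le T$ and $0\le\tau_k\le T$; $0\le f_k\le f_{\max}$; $0\le\rho_k\le1$; $P_0\le P_{\max}$; $|e^{j\theta_n}|=1$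 for all $n$; $p_k,t^b_k,t^o_k\ge0$.
   Formalization: The harvesting constants satisfy $b_k \le a_k c_k$ for every device k, and the maximum means that each feasible point is matched or exceeded in $\eta_{EE}$ by a feasible point with $P_0=P_{\max}$. Apart from conventions, each condition added here is assumed in the paper as well or is needed for the statement above to hold. *)

theory Defs
  imports Complex_Main
begin

text \<open>System parameters: K devices indexed by {..<K}, N RIS elements indexed by {..<N}.
  Vectors in C^N are functions nat => complex restricted to indices < N.\<close>

record sys =
  sK :: nat
  sN :: nat
  sT :: real
  ssigma2 :: real
  szeta :: real
  sCcpu :: real
  seps :: "nat \<Rightarrow> real"
  sdelta :: real
  sPc :: "nat \<Rightarrow> real"
  spc :: "nat \<Rightarrow> real"
  sa :: "nat \<Rightarrow> real"
  sb :: "nat \<Rightarrow> real"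
  sc :: "nat \<Rightarrow> real"
  sQ :: "nat \<Rightarrow> real"
  sgmin :: "nat \<Rightarrow> real"
  sPmax :: real
  sfmax :: real
  sgPU :: "nat \<Rightarrow> complex"
  sgPI :: "nat \<Rightarrow> complex"
  sgIU :: "nat \<Rightarrow> nat \<Rightarrow> complex"
  shUM :: "nat \<Rightarrow> complex"
  shUI :: "nat \<Rightarrow> nat \<Rightarrow> complex"
  shIM :: "nat \<Rightarrow> complex"

record vars =
  vtb :: "nat \<Rightarrow> real"
  vto :: "nat \<Rightarrow> real"
  vrho :: "nat \<Rightarrow> real"
  vP0 :: real
  vp :: "nat \<Rightarrow> real"
  vtau :: "nat \<Rightarrow> real"
  vf :: "nat \<Rightarrow> real"
  vtheta :: "nat \<Rightarrow> real"

definition gk :: "sys \<Rightarrow> vars \<Rightarrow> nat \<Rightarrow> complex" where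
  "gk S v k = sgPU S k +
     (\<Sum>n<sN S. cnj (sgPI S n) * exp (\<i> * complex_of_real (vtheta v n)) * sgIU S k n)"

definition hk :: "sys \<Rightarrow> vars \<Rightarrow> nat \<Rightarrow> complex" where
  "hk S v k = shUM S k +
     (\<Sum>n<sN S. cnj (shUI S k n) * exp (\<i> * complex_of_real (vtheta v n)) * shIM S n)"

definition Gam_b :: "sys \<Rightarrow> vars \<Rightarrow> nat \<Rightarrow> real" where
  "Gam_b S v k = vtb v k * log 2 (1 + szeta S * vrho v k * vP0 v
       * (cmod (hk S v k))\<^sup>2 * (cmod (gk S v k))\<^sup>2 / ssigma2 S)"

definition Gam_o :: "sys \<Rightarrow> vars \<Rightarrow> nat \<Rightarrow> real" where
  "Gam_o S v k = vto v k * log 2 (1 + vp v k * (cmod (hk S v k))\<^sup>2 / ssigma2 S)"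

definition Gam_l :: "sys \<Rightarrow> vars \<Rightarrow> nat \<Rightarrow> real" where
  "Gam_l S v k = vtau v k * vf v k / sCcpu S"

definition Rsum :: "sys \<Rightarrow> vars \<Rightarrow> real" where
  "Rsum S v = (\<Sum>k<sK S. Gam_b S v k + Gam_o S v k + Gam_l S v k)"

definition E1 :: "sys \<Rightarrow> vars \<Rightarrow> nat \<Rightarrow> real" where
  "E1 S v k = sPc S k * vtb v k"

definition E2 :: "sys \<Rightarrow> vars \<Rightarrow> nat \<Rightarrow> real" where
  "E2 S v k = vp v k / sdelta S * vto v k + spc S k * vto v k + seps S k * vf v k ^ 3 * vtau v k"

definition Etotal :: "sys \<Rightarrow> vars \<Rightarrow> real" where
  "Etotal S v = (\<Sum>k<sK S. E1 S v k + E2 S v k)"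

definition Eb :: "sys \<Rightarrow> vars \<Rightarrow> nat \<Rightarrow> real" where
  "Eb S v k = ((sa S k * (1 - vrho v k) * vP0 v * (cmod (gk S v k))\<^sup>2 + sb S k)
               / ((1 - vrho v k) * vP0 v * (cmod (gk S v k))\<^sup>2 + sc S k)
             - sb S k / sc S k) * vtb v k"

definition Pb :: "sys \<Rightarrow> vars \<Rightarrow> nat \<Rightarrow> real" where
  "Pb S v k = (sa S k * vP0 v * (cmod (gk S v k))\<^sup>2 + sb S k)
               / (vP0 v * (cmod (gk S v k))\<^sup>2 + sc S k) - sb S k / sc S k"

definition Et :: "sys \<Rightarrow> vars \<Rightarrow> nat \<Rightarrow> real" where
  "Et S v k = Eb S v k + (\<Sum>i\<in>{..<sK S} - {k}. Pb S v k * vtb v i)"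

definition EE :: "sys \<Rightarrow> vars \<Rightarrow> real" where
  "EE S v = Rsum S v / Etotal S v"

text \<open>Feasible set of (P1). Unit-modulus reflection is built in (Theta entries are exp(i theta_n)).\<close>

definition feasible :: "sys \<Rightarrow> vars \<Rightarrow> bool" where
  "feasible S v \<longleftrightarrow>
     (\<forall>k<sK S. Gam_b S v k + Gam_o S v k + Gam_l S v k \<ge> sgmin S k) \<and>
     (\<forall>k<sK S. E1 S v k + E2 S v k \<le> Et S v k + sQ S k) \<and>
     (\<Sum>k<sK S. vtb v k + vto v k) \<le> sT S \<and>
     (\<forall>k<sK S. 0 \<le> vtau v k \<and> vtau v k \<le> sT S) \<and>
     (\<forall>k<sK S. 0 \<le> vf v k \<and> vf v k \<le> sfmax S) \<and>
     (\<forall>k<sK S. 0 \<le> vrho v k \<and> vrho v k \<le> 1) \<and>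
     0 \<le> vP0 v \<and> vP0 v \<le> sPmax S \<and>
     (\<forall>k<sK S. 0 \<le> vp v k \<and> 0 \<le> vtb v k \<and> 0 \<le> vto v k)"

end

theory Submission
  imports Defs
begin

lemma eh_mono:
  fixes a b c x y :: real
  assumes "0 < c" "b \<le> a * c" "0 \<le> x" "x \<le> y"
  shows "(a * x + b) / (x + c) \<le> (a * y + b) / (y + c)"
proof -
  have "(a * x + b) * (y + c) \<le> (a * y + b) * (x + c)"
  proof -
    have "0 \<le> (a * c - b) * (y - x)" using assms by simp
    thus ?thesis by (simp add: algebra_simps)
  qed
  thus ?thesis using assms by (simp add: divide_simps)
qed

lemma gk_upd[simp]: "gk S (v\<lparr>vP0 := P\<rparr>) k = gk S v k"
  by (simp add: gk_def)
lemma hk_upd[simp]: "hk S (v\<lparr>vP0 := P\<rparr>) k = hk S v k"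
  by (simp add: hk_def)

theorem proposition3:
  fixes S :: sys
  assumes "0 < sT S" and "0 < ssigma2 S" and "0 < szeta S" and "0 < sCcpu S"
    and "0 < sdelta S"
    and "\<And>k. k < sK S \<Longrightarrow> 0 < seps S k \<and> 0 < sPc S k \<and> 0 < spc S k
             \<and> 0 < sa S k \<and> 0 < sb S k \<and> 0 < sc S k \<and> 0 \<le> sQ S k \<and> 0 < sgmin S k"
    and EH_mono: "\<And>k. k < sK S \<Longrightarrow> sb S k \<le> sa S k * sc S k"
  shows "\<forall>v. feasible S v \<longrightarrow>
           (\<exists>v'. feasible S v' \<and> vP0 v' = sPmax S \<and> EE S v \<le> EE S v')"
proof (intro allI impI)
  fix v assume F: "feasible S v"
  define v' where "v' = v\<lparr>vP0 := sPmax S\<rparr>"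
  have P: "0 \<le> vP0 v" "vP0 v \<le> sPmax S" using F by (auto simp: feasible_def)
  have P0': "vP0 v' = sPmax S" by (simp add: v'_def)
  have Gb: "Gam_b S v k \<le> Gam_b S v' k" if k: "k < sK S" for k
  proof -
    have r: "0 \<le> vrho v k" "0 \<le> vtb v k" using F k by (auto simp: feasible_def)
    let ?C = "szeta S * vrho v k * (cmod (hk S v k))\<^sup>2 * (cmod (gk S v k))\<^sup>2 / ssigma2 S"
    have C: "0 \<le> ?C" using r assms(2,3) by simp
    have "?C * vP0 v \<le> ?C * sPmax S" by (rule mult_left_mono[OF P(2) C])
    moreover have "0 \<le> ?C * vP0 v" by (rule mult_nonneg_nonneg[OF C P(1)])
    ultimately have "log 2 (1 + ?C * vP0 v) \<le> log 2 (1 + ?C * sPmax S)" by simp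
    hence "vtb v k * log 2 (1 + ?C * vP0 v) \<le> vtb v k * log 2 (1 + ?C * sPmax S)"
      using r by (simp add: mult_left_mono)
    thus ?thesis by (simp add: Gam_b_def v'_def mult_ac)
  qed
  have Gl: "Gam_l S v' k = Gam_l S v k" "Gam_o S v' k = Gam_o S v k"
     "E1 S v' k = E1 S v k" "E2 S v' k = E2 S v k" for k
    by (simp_all add: v'_def Gam_l_def Gam_o_def E1_def E2_def)
  have Et: "Etotal S v' = Etotal S v" by (simp add: Etotal_def Gl)
  have R: "Rsum S v \<le> Rsum S v'"
    unfolding Rsum_def by (rule sum_mono) (simp add: Gl Gb)
  have Ebm: "Eb S v k \<le> Eb S v' k" if k: "k < sK S" for k
  proof -
    have r: "0 \<le> vrho v k" "vrho v k \<le> 1" "0 \<le> vtb v k" using F k by (auto simp: feasible_def)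
    have c: "0 < sc S k" using assms(6)[OF k] by simp
    let ?D = "(1 - vrho v k) * (cmod (gk S v k))\<^sup>2"
    have D: "0 \<le> ?D" using r by simp
    have "(sa S k * (?D * vP0 v) + sb S k) / (?D * vP0 v + sc S k)
       \<le> (sa S k * (?D * sPmax S) + sb S k) / (?D * sPmax S + sc S k)"
      by (rule eh_mono[OF c EH_mono[OF k]]) (use D P in \<open>simp_all add: mult_left_mono\<close>)
    hence "((sa S k * (?D * vP0 v) + sb S k) / (?D * vP0 v + sc S k) - sb S k / sc S k) * vtb v k
       \<le> ((sa S k * (?D * sPmax S) + sb S k) / (?D * sPmax S + sc S k) - sb S k / sc S k) * vtb v k"
      using r by (simp add: mult_right_mono)
    thus ?thesis by (simp add: Eb_def v'_def mult_ac)
  qed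
  have Pbm: "Pb S v k \<le> Pb S v' k" if k: "k < sK S" for k
  proof -
    have c: "0 < sc S k" using assms(6)[OF k] by simp
    let ?D = "(cmod (gk S v k))\<^sup>2"
    have D: "0 \<le> ?D" by simp
    have "(sa S k * (?D * vP0 v) + sb S k) / (?D * vP0 v + sc S k)
       \<le> (sa S k * (?D * sPmax S) + sb S k) / (?D * sPmax S + sc S k)"
      by (rule eh_mono[OF c EH_mono[OF k]]) (use D P in \<open>simp_all add: mult_left_mono\<close>)
    thus ?thesis by (simp add: Pb_def v'_def mult_ac)
  qed
  have Etm: "Et S v k \<le> Et S v' k" if k: "k < sK S" for k
  proof -
    have "(\<Sum>i\<in>{..<sK S} - {k}. Pb S v k * vtb v i) \<le> (\<Sum>i\<in>{..<sK S} - {k}. Pb S v' k * vtb v' i)"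
    proof (rule sum_mono)
      fix i assume "i \<in> {..<sK S} - {k}"
      hence "0 \<le> vtb v i" using F by (auto simp: feasible_def)
      thus "Pb S v k * vtb v i \<le> Pb S v' k * vtb v' i"
        using Pbm[OF k] by (simp add: v'_def mult_right_mono)
    qed
    thus ?thesis unfolding Et_def using Ebm[OF k] by simp
  qed
  have feas': "feasible S v'"
    using F Gb Etm unfolding feasible_def
    apply (simp add: Gl)
    apply (intro conjI)
    apply (meson order_trans add_right_mono)
    apply (meson order_trans add_right_mono)
    apply (simp add: v'_def)
    apply (simp add: v'_def)
    apply (simp add: v'_def)
    apply (simp add: v'_def)
    using P apply (simp add: v'_def)
    apply (simp add: v'_def)
    apply (simp add: v'_def)
    done
  have E0: "0 \<le> Etotal S v"
    unfolding Etotal_def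
  proof (rule sum_nonneg)
    fix k assume k: "k \<in> {..<sK S}"
    hence h: "0 \<le> vtb v k" "0 \<le> vto v k" "0 \<le> vp v k" "0 \<le> vf v k" "0 \<le> vtau v k"
      using F by (auto simp: feasible_def)
    have p: "0 < sPc S k" "0 < spc S k" "0 < seps S k" using assms(6) k by auto
    show "0 \<le> E1 S v k + E2 S v k" unfolding E1_def E2_def
      using h p assms(5) by (intro add_nonneg_nonneg mult_nonneg_nonneg divide_nonneg_pos) auto
  qed
  have "EE S v \<le> EE S v'" unfolding EE_def Et using R E0 by (simp add: divide_right_mono)
  thus "\<exists>v'. feasible S v' \<and> vP0 v' = sPmax S \<and> EE S v \<le> EE S v'"
    using feas' P0' by blast
qed

end
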